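(* Let $A'=(c^1,\ldots,c^m)$, $A''=(c^{m+1},\ldots,c^M)$, $A=(c^1,\ldots,c^M)$ be sequences of customer types and $B'=(s^1,\ldots,s^n)$, $B''=(s^{n+1},\ldots,s^N)$, $B=(s^1,\ldots,s^N)$ sequences of server types. Let $K',K'',K$ be the numbers of unmatched customers and $L',L'',L$ the numbers of unmatched servers in the unique complete FCFS matchings of $(A',B')$, of $(A'',B'')$ and of $(A,B)$ respectively. Then $K\le K'+K''$ and $L\le L'+L''$.
   Context: Let $\mathcal{C}=\{c_1,\ldots,c_I\}$ (customer types) and $\mathcal{S}=\{s_1,\ldots,s_J\}$ (server types) be finite sets and $G=(\mathcal{C},\mathcal{S},\mathcal{E})$, $\mathcal{E}\subseteq\mathcal{C}\times\mathcal{S}$, a connected bipartite compatibility graph; a customer of type $c_i$ and a server of type $s_j$ are compatible iff $(c_i,s_j)\in\mathcal{E}$. Given ordered sequences $(c^m)_{m\in T_1}$, $(s^n)_{n\in T_2}$ of types, a matching is a set $A\subseteq T_1\times T_2$ such that $(m,n)\in A\Rightarrow (c^m,s^n)\in\mathcal{E}$ and each index appears in at most one pair. It is complete if there is no unmatched $m$ and unmatched $n$ with $(c^m,s^n)\in\mathcal{E}$. It is FCFS if for every $(m,n)\in A$: for every $l<n$ with $(c^m,s^l)\in\mathcal{E}$ there is $k<m$ with $(k,l)\in A$, and for every $k<m$ with $(c^k,s^n)\in\mathcal{E}$ there is $l<n$ with $(k,l)\in A$. For finite index sets a complete FCFS matching exists and is unique. *)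

theory Defs
  imports Main
begin

text \<open>Sequences of types are lists; positions are 0-based list indices.
  A matching is a set of index pairs (customer position, server position).\<close>

definition bip_connected :: "'c set \<Rightarrow> 's set \<Rightarrow> ('c \<times> 's) set \<Rightarrow> bool" where
  "bip_connected C S E \<longleftrightarrow>
     (let R = {(Inl c, Inr s) | c s. (c, s) \<in> E} \<union> {(Inr s, Inl c) | c s. (c, s) \<in> E}
      in \<forall>x \<in> C <+> S. \<forall>y \<in> C <+> S. (x, y) \<in> R\<^sup>*)"

definition is_matching :: "('c \<times> 's) set \<Rightarrow> 'c list \<Rightarrow> 's list \<Rightarrow> (nat \<times> nat) set \<Rightarrow> bool" where
  "is_matching E cs ss A \<longleftrightarrow>
     A \<subseteq> {..<length cs} \<times> {..<length ss} \<and>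
     (\<forall>(m, n) \<in> A. (cs ! m, ss ! n) \<in> E) \<and>
     (\<forall>m n n'. (m, n) \<in> A \<longrightarrow> (m, n') \<in> A \<longrightarrow> n = n') \<and>
     (\<forall>m m' n. (m, n) \<in> A \<longrightarrow> (m', n) \<in> A \<longrightarrow> m = m')"

definition unmatched_cust :: "'c list \<Rightarrow> (nat \<times> nat) set \<Rightarrow> nat set" where
  "unmatched_cust cs A = {m. m < length cs \<and> (\<nexists>n. (m, n) \<in> A)}"

definition unmatched_serv :: "'s list \<Rightarrow> (nat \<times> nat) set \<Rightarrow> nat set" where
  "unmatched_serv ss A = {n. n < length ss \<and> (\<nexists>m. (m, n) \<in> A)}"

definition is_complete :: "('c \<times> 's) set \<Rightarrow> 'c list \<Rightarrow> 's list \<Rightarrow> (nat \<times> nat) set \<Rightarrow> bool" where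
  "is_complete E cs ss A \<longleftrightarrow>
     \<not> (\<exists>m \<in> unmatched_cust cs A. \<exists>n \<in> unmatched_serv ss A. (cs ! m, ss ! n) \<in> E)"

definition is_FCFS :: "('c \<times> 's) set \<Rightarrow> 'c list \<Rightarrow> 's list \<Rightarrow> (nat \<times> nat) set \<Rightarrow> bool" where
  "is_FCFS E cs ss A \<longleftrightarrow>
     (\<forall>(m, n) \<in> A.
        (\<forall>l < n. (cs ! m, ss ! l) \<in> E \<longrightarrow> (\<exists>k < m. (k, l) \<in> A)) \<and>
        (\<forall>k < m. (cs ! k, ss ! n) \<in> E \<longrightarrow> (\<exists>l < n. (k, l) \<in> A)))"

definition complete_FCFS :: "('c \<times> 's) set \<Rightarrow> 'c list \<Rightarrow> 's list \<Rightarrow> (nat \<times> nat) set \<Rightarrow> bool" where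
  "complete_FCFS E cs ss A \<longleftrightarrow>
     is_matching E cs ss A \<and> is_complete E cs ss A \<and> is_FCFS E cs ss A"

end

theory Submission
  imports Defs
begin

definition pick :: "('c \<times> 's) set \<Rightarrow> 's list \<Rightarrow> nat set \<Rightarrow> 'c \<Rightarrow> nat option" where
  "pick E ss U c = (if \<exists>n. n < length ss \<and> n \<notin> U \<and> (c, ss!n) \<in> E
     then Some (LEAST n. n < length ss \<and> n \<notin> U \<and> (c, ss!n) \<in> E) else None)"

fun cnt :: "('c \<times> 's) set \<Rightarrow> 's list \<Rightarrow> nat set \<Rightarrow> 'c list \<Rightarrow> nat" where
  "cnt E ss U [] = 0"
| "cnt E ss U (c#cs) = (case pick E ss U c of None \<Rightarrow> cnt E ss U cs
      | Some n \<Rightarrow> Suc (cnt E ss (insert n U) cs))"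

fun usedf :: "('c \<times> 's) set \<Rightarrow> 's list \<Rightarrow> nat set \<Rightarrow> 'c list \<Rightarrow> nat set" where
  "usedf E ss U [] = U"
| "usedf E ss U (c#cs) = (case pick E ss U c of None \<Rightarrow> usedf E ss U cs
      | Some n \<Rightarrow> usedf E ss (insert n U) cs)"

lemma pick_SomeD:
  assumes "pick E ss U c = Some n"
  shows "n < length ss \<and> n \<notin> U \<and> (c, ss!n) \<in> E \<and>
         (\<forall>l<n. l \<notin> U \<longrightarrow> (c, ss!l) \<in> E \<longrightarrow> False)"
proof -
  let ?P = "\<lambda>n. n < length ss \<and> n \<notin> U \<and> (c, ss!n) \<in> E"
  have ex: "\<exists>n. ?P n" and n: "n = (LEAST n. ?P n)" using assms
    by (auto simp: pick_def split: if_splits)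
  have "?P n" using LeastI_ex[OF ex] n by simp
  moreover have "\<forall>l<n. l \<notin> U \<longrightarrow> (c, ss!l) \<in> E \<longrightarrow> False"
  proof (intro allI impI)
    fix l assume "l < n" "l \<notin> U" "(c, ss!l) \<in> E"
    moreover have "l < length ss" using \<open>l < n\<close> \<open>?P n\<close> by simp
    ultimately show False using not_less_Least[of l ?P] n by blast
  qed
  ultimately show ?thesis by blast
qed

lemma pick_NoneD:
  "pick E ss U c = None \<Longrightarrow> n < length ss \<Longrightarrow> n \<notin> U \<Longrightarrow> (c, ss!n) \<in> E \<Longrightarrow> False"
  by (auto simp: pick_def split: if_splits)

lemma pick_eqI:
  assumes "n < length ss" "n \<notin> U" "(c, ss!n) \<in> E"
    and "\<And>l. l < n \<Longrightarrow> l \<notin> U \<Longrightarrow> (c, ss!l) \<in> E \<Longrightarrow> False"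
  shows "pick E ss U c = Some n"
proof -
  let ?P = "\<lambda>n. n < length ss \<and> n \<notin> U \<and> (c, ss!n) \<in> E"
  have "(LEAST n. ?P n) = n"
    by (rule Least_equality) (use assms in \<open>auto simp: not_less[symmetric]\<close>)
  then show ?thesis using assms unfolding pick_def by auto
qed

lemma pick_NoneI:
  "(\<And>n. n < length ss \<Longrightarrow> n \<notin> U \<Longrightarrow> (c, ss!n) \<in> E \<Longrightarrow> False) \<Longrightarrow> pick E ss U c = None"
  by (auto simp: pick_def)

lemma card_usedf: "finite U \<Longrightarrow> card (usedf E ss U cs) = card U + cnt E ss U cs
   \<and> finite (usedf E ss U cs)"
proof (induction cs arbitrary: U)
  case Nil then show ?case by simp
next
  case (Cons c cs)
  show ?case
  proof (cases "pick E ss U c")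
    case None then show ?thesis using Cons by simp
  next
    case (Some n)
    then have "n \<notin> U" using pick_SomeD by metis
    then show ?thesis using Some Cons.IH[of "insert n U"] Cons.prems by simp
  qed
qed

lemma cnt_append: "cnt E ss U (xs @ ys) = cnt E ss U xs + cnt E ss (usedf E ss U xs) ys"
  by (induction xs arbitrary: U) (auto split: option.splits)

lemma cnt_insert:
  "cnt E ss (insert y U) cs \<le> cnt E ss U cs \<and> cnt E ss U cs \<le> Suc (cnt E ss (insert y U) cs)"
proof (induction cs arbitrary: U y)
  case Nil then show ?case by simp
next
  case (Cons c cs)
  show ?case
  proof (cases "y \<in> U")
    case True then show ?thesis by (simp add: insert_absorb)
  next
    case yU: False
    show ?thesis
    proof (cases "pick E ss U c")
      case None
      then have "pick E ss (insert y U) c = None"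
        by (intro pick_NoneI) (auto dest: pick_NoneD)
      then show ?thesis using None Cons.IH[where U=U and y=y] by simp
    next
      case (Some z)
      note zS = pick_SomeD[OF Some]
      show ?thesis
      proof (cases "z = y")
        case False
        then have "pick E ss (insert y U) c = Some z"
          using zS by (intro pick_eqI) auto
        then show ?thesis using Some Cons.IH[where U="insert z U" and y=y]
          by (simp add: insert_commute)
      next
        case True
        show ?thesis
        proof (cases "pick E ss (insert y U) c")
          case None
          then show ?thesis using Some True Cons.IH[where U=U and y=y] by simp
        next
          case (Some w)
          then show ?thesis using \<open>pick E ss U c = Some z\<close> True
              Cons.IH[where U="insert y U" and y=w] by simp
        qed
      qed
    qed
  qed
qed

lemma cnt_union:
  assumes "finite D"
  shows "cnt E ss (U \<union> D) cs \<le> cnt E ss U cs \<and> cnt E ss U cs \<le> cnt E ss (U \<union> D) cs + card D"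
  using assms
proof (induction D rule: finite_induct)
  case empty then show ?case by simp
next
  case (insert x F)
  have "U \<union> insert x F = insert x (U \<union> F)" by auto
  then show ?case using insert cnt_insert[of E ss x "U \<union> F" cs] by auto
qed

lemma usedf_ext:
  "usedf E (B1 @ B2) U cs \<inter> {..<length B1} = usedf E B1 (U \<inter> {..<length B1}) cs"
proof (induction cs arbitrary: U)
  case Nil then show ?case by simp
next
  case (Cons c cs)
  let ?n = "length B1"
  show ?case
  proof (cases "pick E B1 (U \<inter> {..<?n}) c")
    case (Some x)
    note xS = pick_SomeD[OF Some]
    have "pick E (B1 @ B2) U c = Some x"
    proof (rule pick_eqI)
      show "x < length (B1 @ B2)" using xS by simp
      show "x \<notin> U" using xS by auto
      show "(c, (B1 @ B2) ! x) \<in> E" using xS by (simp add: nth_append)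
      fix l assume "l < x" "l \<notin> U" "(c, (B1 @ B2) ! l) \<in> E"
      then show False using xS by (auto simp: nth_append)
    qed
    moreover have "insert x U \<inter> {..<?n} = insert x (U \<inter> {..<?n})" using xS by auto
    ultimately show ?thesis using Some Cons.IH[of "insert x U"] by simp
  next
    case None
    show ?thesis
    proof (cases "pick E (B1 @ B2) U c")
      case None2: None
      then show ?thesis using None Cons.IH[of U] by simp
    next
      case (Some y)
      note yS = pick_SomeD[OF Some]
      have "y \<ge> ?n"
      proof (rule ccontr)
        assume "\<not> ?n \<le> y"
        then show False using pick_NoneD[OF None, of y] yS by (auto simp: nth_append)
      qed
      then have "insert y U \<inter> {..<?n} = U \<inter> {..<?n}" by auto
      then show ?thesis using None Some Cons.IH[of "insert y U"] by simp
    qed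
  qed
qed

lemma cnt_shift:
  "cnt E (B1 @ B2) ({..<length B1} \<union> (\<lambda>x. x + length B1) ` U) cs = cnt E B2 U cs"
proof (induction cs arbitrary: U)
  case Nil then show ?case by simp
next
  case (Cons c cs)
  let ?n = "length B1"
  let ?U = "{..<?n} \<union> (\<lambda>x. x + ?n) ` U"
  show ?case
  proof (cases "pick E B2 U c")
    case None
    have "pick E (B1 @ B2) ?U c = None"
    proof (rule pick_NoneI)
      fix l assume l: "l < length (B1 @ B2)" "l \<notin> ?U" "(c, (B1 @ B2) ! l) \<in> E"
      then have "l \<ge> ?n" by auto
      then obtain j where j: "l = j + ?n" by (metis add.commute le_Suc_ex)
      show False using pick_NoneD[OF None, of j] l j by (auto simp: nth_append)
    qed
    then show ?thesis using None Cons.IH[of U] by simp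
  next
    case (Some x)
    note xS = pick_SomeD[OF Some]
    have "pick E (B1 @ B2) ?U c = Some (x + ?n)"
    proof (rule pick_eqI)
      show "x + ?n < length (B1 @ B2)" using xS by simp
      show "x + ?n \<notin> ?U" using xS by auto
      show "(c, (B1 @ B2) ! (x + ?n)) \<in> E" using xS by (simp add: nth_append)
      fix l assume l: "l < x + ?n" "l \<notin> ?U" "(c, (B1 @ B2) ! l) \<in> E"
      then have "l \<ge> ?n" by auto
      then obtain j where j: "l = j + ?n" by (metis add.commute le_Suc_ex)
      show False using xS l j by (auto simp: nth_append)
    qed
    moreover have "insert (x + ?n) ?U = {..<?n} \<union> (\<lambda>x. x + ?n) ` (insert x U)" by auto
    ultimately show ?thesis using Some Cons.IH[of "insert x U"] by simp
  qed
qed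

lemma FCFS_D1: "is_FCFS E cs ss M \<Longrightarrow> (m, n) \<in> M \<Longrightarrow> l < n \<Longrightarrow> (cs ! m, ss ! l) \<in> E \<Longrightarrow> \<exists>k<m. (k, l) \<in> M"
  unfolding is_FCFS_def by (drule bspec) auto

lemma FCFS_D2: "is_FCFS E cs ss M \<Longrightarrow> (m, n) \<in> M \<Longrightarrow> k < m \<Longrightarrow> (cs ! k, ss ! n) \<in> E \<Longrightarrow> \<exists>l<n. (k, l) \<in> M"
  unfolding is_FCFS_def by (drule bspec) auto

lemma compl_D: "is_complete E cs ss M \<Longrightarrow> m < length cs \<Longrightarrow> n < length ss \<Longrightarrow> (\<nexists>n'. (m, n') \<in> M)
      \<Longrightarrow> (\<nexists>m'. (m', n) \<in> M) \<Longrightarrow> (cs ! m, ss ! n) \<in> E \<Longrightarrow> False"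
  unfolding is_complete_def unmatched_cust_def unmatched_serv_def by blast

lemma char_step:
  assumes M: "complete_FCFS E cs ss M" and j: "j \<le> length cs"
  shows "card {p \<in> M. j \<le> fst p} = cnt E ss {n. \<exists>m<j. (m, n) \<in> M} (drop j cs)"
  using j
proof (induction "length cs - j" arbitrary: j)
  case 0
  then have "length cs = j" by simp
  have "M \<subseteq> {..<length cs} \<times> {..<length ss}" using M
    by (simp add: complete_FCFS_def is_matching_def)
  then have emp: "{p \<in> M. j \<le> fst p} = {}" using \<open>length cs = j\<close> by auto
  show ?case unfolding emp using \<open>length cs = j\<close> by simp
next
  case (Suc k)
  then have jl: "j < length cs" by simp
  have IH: "card {p \<in> M. Suc j \<le> fst p} = cnt E ss {n. \<exists>m<Suc j. (m, n) \<in> M} (drop (Suc j) cs)"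
    using Suc by simp
  have dr: "drop j cs = cs ! j # drop (Suc j) cs" using jl by (simp add: Cons_nth_drop_Suc)
  have sub: "M \<subseteq> {..<length cs} \<times> {..<length ss}"
    and cmp: "\<And>m n. (m, n) \<in> M \<Longrightarrow> (cs ! m, ss ! n) \<in> E"
    and u1: "\<And>m n n'. (m, n) \<in> M \<Longrightarrow> (m, n') \<in> M \<Longrightarrow> n = n'"
    and u2: "\<And>m m' n. (m, n) \<in> M \<Longrightarrow> (m', n) \<in> M \<Longrightarrow> m = m'"
    using M by (auto simp: complete_FCFS_def is_matching_def)
  have fin: "finite M" using sub by (rule finite_subset) simp
  have fc1: "\<And>m n l. (m, n) \<in> M \<Longrightarrow> l < n \<Longrightarrow> (cs ! m, ss ! l) \<in> E \<Longrightarrow> \<exists>k<m. (k, l) \<in> M"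
    and fc2: "\<And>m n k. (m, n) \<in> M \<Longrightarrow> k < m \<Longrightarrow> (cs ! k, ss ! n) \<in> E \<Longrightarrow> \<exists>l<n. (k, l) \<in> M"
    using M unfolding complete_FCFS_def by (auto dest: FCFS_D1 FCFS_D2)
  have compl: "\<And>m n. m < length cs \<Longrightarrow> n < length ss \<Longrightarrow> (\<nexists>n'. (m, n') \<in> M)
      \<Longrightarrow> (\<nexists>m'. (m', n) \<in> M) \<Longrightarrow> (cs ! m, ss ! n) \<in> E \<Longrightarrow> False"
    using M unfolding complete_FCFS_def by (auto dest: compl_D)
  let ?R = "{n. \<exists>m<j. (m, n) \<in> M}"
  show ?case
  proof (cases "\<exists>n. (j, n) \<in> M")
    case True
    then obtain n where jn: "(j, n) \<in> M" by blast
    have p: "pick E ss ?R (cs ! j) = Some n"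
    proof (rule pick_eqI)
      show "n < length ss" using sub jn by auto
      show "n \<notin> ?R" using u2 jn by fastforce
      show "(cs ! j, ss ! n) \<in> E" using cmp jn .
      fix l assume "l < n" "l \<notin> ?R" "(cs ! j, ss ! l) \<in> E"
      then show False using fc1[OF jn] by blast
    qed
    have R': "{n. \<exists>m<Suc j. (m, n) \<in> M} = insert n ?R"
      using jn u1 by (auto simp: less_Suc_eq)
    have S': "{p \<in> M. j \<le> fst p} = insert (j, n) {p \<in> M. Suc j \<le> fst p}"
      using jn u1 by (auto simp: Suc_le_eq le_eq_less_or_eq)
    have "card {p \<in> M. j \<le> fst p} = Suc (card {p \<in> M. Suc j \<le> fst p})"
      unfolding S' using fin by (subst card_insert_disjoint) auto
    then show ?thesis using IH R' p dr by simp
  next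
    case False
    have p: "pick E ss ?R (cs ! j) = None"
    proof (rule pick_NoneI)
      fix n assume n: "n < length ss" "n \<notin> ?R" "(cs ! j, ss ! n) \<in> E"
      show False
      proof (cases "\<exists>m'. (m', n) \<in> M")
        case True
        then obtain k where kn: "(k, n) \<in> M" by blast
        have "\<not> k < j" using n(2) kn by blast
        moreover have "k \<noteq> j" using False kn by blast
        ultimately have "k > j" by simp
        then show False using fc2[OF kn _ n(3)] False by blast
      next
        case False2: False
        show False using compl[OF jl n(1) False False2 n(3)] .
      qed
    qed
    have R': "{n. \<exists>m<Suc j. (m, n) \<in> M} = ?R"
      using False by (auto simp: less_Suc_eq)
    have S': "{p \<in> M. j \<le> fst p} = {p \<in> M. Suc j \<le> fst p}"
      using False by (auto simp: le_eq_less_or_eq)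
    show ?thesis using IH R' S' p dr by simp
  qed
qed

lemma char_card:
  assumes "complete_FCFS E cs ss M"
  shows "card M = cnt E ss {} cs"
  using char_step[OF assms, of 0] by simp

lemma unm_counts:
  assumes "complete_FCFS E cs ss M"
  shows "card (unmatched_cust cs M) + card M = length cs \<and>
         card (unmatched_serv ss M) + card M = length ss"
proof -
  have sub: "M \<subseteq> {..<length cs} \<times> {..<length ss}"
    and u1: "\<And>m n n'. (m, n) \<in> M \<Longrightarrow> (m, n') \<in> M \<Longrightarrow> n = n'"
    and u2: "\<And>m m' n. (m, n) \<in> M \<Longrightarrow> (m', n) \<in> M \<Longrightarrow> m = m'"
    using assms by (auto simp: complete_FCFS_def is_matching_def)
  have i1: "inj_on fst M" using u1 by (auto simp: inj_on_def)
  have i2: "inj_on snd M" using u2 by (auto simp: inj_on_def)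
  have d: "card (fst ` M) = card M" "card (snd ` M) = card M"
    using card_image[OF i1] card_image[OF i2] by auto
  have e1: "unmatched_cust cs M = {..<length cs} - fst ` M"
    by (force simp: unmatched_cust_def)
  have e2: "unmatched_serv ss M = {..<length ss} - snd ` M"
    by (force simp: unmatched_serv_def)
  have s1: "fst ` M \<subseteq> {..<length cs}" and s2: "snd ` M \<subseteq> {..<length ss}" using sub by auto
  show ?thesis
    using card_Diff_subset[OF finite_subset[OF s1] s1] card_Diff_subset[OF finite_subset[OF s2] s2]
      card_mono[OF _ s1] card_mono[OF _ s2] d e1 e2 by simp
qed

lemma core:
  assumes M1: "complete_FCFS E A1 B1 M1" and M2: "complete_FCFS E A2 B2 M2"
    and M: "complete_FCFS E (A1 @ A2) (B1 @ B2) M"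
  shows "card M1 + card M2 \<le> card M"
proof -
  let ?B = "B1 @ B2" and ?n = "length B1"
  define W where "W = usedf E ?B {} A1"
  have cW: "card W = cnt E ?B {} A1" and fW: "finite W"
    using card_usedf[of "{}" E ?B A1] unfolding W_def by auto
  have "W \<inter> {..<?n} = usedf E B1 {} A1" unfolding W_def using usedf_ext[of E B1 B2 "{}" A1] by simp
  then have cW1: "card (W \<inter> {..<?n}) = card M1"
    using card_usedf[of "{}" E B1 A1] char_card[OF M1] by simp
  define X where "X = W - {..<?n}"
  have fX: "finite X" using fW unfolding X_def by simp
  have cWX: "card W = card (W \<inter> {..<?n}) + card X" unfolding X_def
    using fW by (metis Diff_Diff_Int Int_commute Int_lower2 card_Diff_subset_Int card_Int_Diff ) 
  have eq: "card M = cnt E ?B {} A1 + cnt E ?B W A2"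
    using char_card[OF M] cnt_append unfolding W_def by metis
  have a: "cnt E ?B (W \<union> {..<?n}) A2 \<le> cnt E ?B W A2"
    using cnt_union[of "{..<?n}" E ?B W A2] by simp
  have WU: "W \<union> {..<?n} = {..<?n} \<union> X" unfolding X_def by auto
  have b: "cnt E ?B {..<?n} A2 \<le> cnt E ?B ({..<?n} \<union> X) A2 + card X"
    using cnt_union[OF fX, of E ?B "{..<?n}" A2] by simp
  have c: "cnt E ?B {..<?n} A2 = card M2"
    using cnt_shift[of E B1 B2 "{}" A2] char_card[OF M2] by simp
  have a': "cnt E ?B ({..<?n} \<union> X) A2 \<le> cnt E ?B W A2" using a WU by simp
  show ?thesis using eq a' b c cW cW1 cWX by linarith
qed

theorem lemma3p2:
  fixes C :: "'c set" and S :: "'s set" and E :: "('c \<times> 's) set"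
    and A1 A2 :: "'c list" and B1 B2 :: "'s list"
    and M1 M2 M :: "(nat \<times> nat) set"
  assumes "finite C" and "finite S" and "E \<subseteq> C \<times> S" and "bip_connected C S E"
    and "set A1 \<subseteq> C" and "set A2 \<subseteq> C" and "set B1 \<subseteq> S" and "set B2 \<subseteq> S"
    and "complete_FCFS E A1 B1 M1"
    and "complete_FCFS E A2 B2 M2"
    and "complete_FCFS E (A1 @ A2) (B1 @ B2) M"
  shows "card (unmatched_cust (A1 @ A2) M)
           \<le> card (unmatched_cust A1 M1) + card (unmatched_cust A2 M2)
       \<and> card (unmatched_serv (B1 @ B2) M)
           \<le> card (unmatched_serv B1 M1) + card (unmatched_serv B2 M2)"
  using core[OF assms(9-11)] unm_counts[OF assms(9)] unm_counts[OF assms(10)]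
    unm_counts[OF assms(11)] by simp

end
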